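(* Let $X$ be a finite-dimensional real Hilbert space and $A,B$ closed convex subsets of $X$ with $\operatorname{ri}A\cap\operatorname{ri}B\ne\varnothing$. Let $L=\operatorname{aff}(A\cup B)$, $T=P_BR_A+\mathrm{Id}-P_A$, and let $c\in A\cap B$. Then there exist $\delta>0$ and $\theta\in[0,1[$ such that for all $x\in L$ with $\|x-c\|\le\delta$: $\langle P_Ax-R_Ax,\;P_BR_Ax-R_Ax\rangle\le\theta\,d_A(x)\,d_B(R_Ax)$, and consequently $\|x-Tx\|^2\ge\frac{1-\theta}{5}\max\{d_A^2(x),d_B^2(x)\}$.
   Context: $P_S$ is the metric projection onto a closed convex set $S$, $R_S=2P_S-\mathrm{Id}$, $d_S$ the distance function, $\operatorname{aff}$ the affine hull, $\operatorname{ri}$ the relative interior. *)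

theory Defs
  imports "HOL-Analysis.Analysis"
begin

definition reflector :: "'a::euclidean_space set \<Rightarrow> 'a \<Rightarrow> 'a" where
  "reflector S x = 2 *\<^sub>R closest_point S x - x"

end

theory Submission
  imports Defs
begin

lemma proj_inner:
  fixes S :: "'a::euclidean_space set"
  assumes "subspace S" "closed S"
  shows "inner z (closest_point S z) = (norm (closest_point S z))^2"
proof -
  let ?q = "closest_point S z"
  have cv: "convex S" using assms(1) subspace_imp_convex by blast
  have ne: "S \<noteq> {}" using assms(1) subspace_0 by blast
  have q: "?q \<in> S" using closest_point_in_set[OF assms(2) ne] .
  have "0 \<in> S" using assms(1) subspace_0 by blast
  from closest_point_dot[OF cv assms(2) this, of z]
  have 1: "inner (z - ?q) (0 - ?q) \<le> 0" .
  have "2 *\<^sub>R ?q \<in> S" using assms(1) q subspace_scale by blast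
  from closest_point_dot[OF cv assms(2) this, of z]
  have 2: "inner (z - ?q) (2 *\<^sub>R ?q - ?q) \<le> 0" .
  from 1 2 have "inner (z - ?q) ?q = 0"
    by (simp add: inner_diff_right algebra_simps)
  then show ?thesis by (simp add: inner_diff_left power2_norm_eq_inner)
qed

lemma proj_zero:
  fixes S :: "'a::euclidean_space set"
  assumes "subspace S" "closed S" "closest_point S z = 0" "s \<in> S"
  shows "inner z s = 0"
proof -
  have cv: "convex S" using assms(1) subspace_imp_convex by blast
  have "- s \<in> S" using assms(1,4) subspace_neg by blast
  from closest_point_dot[OF cv assms(2) assms(4), of z] closest_point_dot[OF cv assms(2) this, of z] assms(3)
  show ?thesis by simp
qed

lemma kappa_lemma:
  fixes VA VB V :: "'a::euclidean_space set"
  assumes "subspace VA" "subspace VB" "closed VA" "closed VB" "closed V"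
    "V \<subseteq> span (VA \<union> VB)"
  shows "\<exists>\<kappa>>0. \<forall>z\<in>V. norm z = 1 \<longrightarrow> (\<exists>t\<in>VA \<union> VB. norm t \<le> 1 \<and> \<kappa> \<le> inner z t)"
proof (cases "V \<inter> sphere 0 1 = {}")
  case True
  then show ?thesis by (intro exI[of _ 1]) auto
next
  case False
  let ?K = "V \<inter> sphere 0 1"
  define f where "f z = max (norm (closest_point VA z)) (norm (closest_point VB z))" for z
  have neA: "VA \<noteq> {}" using assms(1) subspace_0 by blast
  have neB: "VB \<noteq> {}" using assms(2) subspace_0 by blast
  have cvA: "convex VA" using assms(1) subspace_imp_convex by blast
  have cvB: "convex VB" using assms(2) subspace_imp_convex by blast
  have cont: "continuous_on ?K f"
    unfolding f_def
    by (intro continuous_intros continuous_on_closest_point cvA cvB assms neA neB)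
  have "compact ?K" using assms(5) by (intro closed_Int_compact) auto
  then obtain z0 where z0: "z0 \<in> ?K" and min: "\<And>y. y \<in> ?K \<Longrightarrow> f z0 \<le> f y"
    using continuous_attains_inf[OF _ False cont] by blast
  have pos: "f z0 > 0"
  proof (rule ccontr)
    assume "\<not> f z0 > 0"
    then have qa: "closest_point VA z0 = 0" and qb: "closest_point VB z0 = 0"
      unfolding f_def by (auto simp: max_def split: if_splits)
    have "orthogonal z0 y" if "y \<in> VA \<union> VB" for y
      using that proj_zero[OF assms(1,3) qa] proj_zero[OF assms(2,4) qb]
      unfolding orthogonal_def by auto
    then have "orthogonal z0 z0"
      using orthogonal_to_span[of z0 "VA \<union> VB" z0] z0 assms(6) by blast
    then show False using z0 by (simp add: orthogonal_def)
  qed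
  show ?thesis
  proof (intro exI[of _ "f z0"] conjI pos ballI impI)
    fix z assume z: "z \<in> V" "norm z = 1"
    then have fz: "f z0 \<le> f z" using min by auto
    have key: "\<exists>t\<in>S. norm t \<le> 1 \<and> f z0 \<le> inner z t"
      if S: "subspace S" "closed S" and le: "f z0 \<le> norm (closest_point S z)" for S
    proof -
      let ?q = "closest_point S z"
      have qpos: "norm ?q > 0" using le pos by linarith
      have "?q \<in> S" using closest_point_in_set[OF S(2)] S(1) subspace_0 by blast
      then have "(1 / norm ?q) *\<^sub>R ?q \<in> S" using S(1) subspace_scale by blast
      moreover have "inner z ((1 / norm ?q) *\<^sub>R ?q) = norm ?q"
        using proj_inner[OF S, of z] qpos by (simp add: power2_eq_square)
      ultimately show ?thesis using le qpos by (intro bexI[of _ "(1 / norm ?q) *\<^sub>R ?q"]) auto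
    qed
    show "\<exists>t\<in>VA \<union> VB. norm t \<le> 1 \<and> f z0 \<le> inner z t"
    proof (cases "norm (closest_point VB z) \<le> norm (closest_point VA z)")
      case True
      then have "f z0 \<le> norm (closest_point VA z)" using fz by (simp add: f_def)
      then show ?thesis using key[OF assms(1,3)] by blast
    next
      case False
      then have "f z0 \<le> norm (closest_point VB z)" using fz by (simp add: f_def)
      then show ?thesis using key[OF assms(2,4)] by blast
    qed
  qed
qed

lemma core:
  fixes A B VA VB :: "'a::euclidean_space set" and p c a b u w t :: 'a
  assumes pA: "p \<in> A" and pB: "p \<in> B" and r: "r > 0"
    and hA: "\<And>t. t \<in> VA \<Longrightarrow> norm t \<le> r \<Longrightarrow> p + t \<in> A"
    and hB: "\<And>t. t \<in> VB \<Longrightarrow> norm t \<le> r \<Longrightarrow> p + t \<in> B"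
    and sA: "subspace VA" and sB: "subspace VB"
    and t: "t \<in> VA \<union> VB" "norm t \<le> 1" "\<kappa> \<le> inner u t"
    and nu: "norm u = 1" and nw: "norm w = 1"
    and F1: "\<And>a'. a' \<in> A \<Longrightarrow> inner u (a' - a) \<le> 0"
    and F2: "\<And>b'. b' \<in> B \<Longrightarrow> inner w (b' - b) \<le> 0"
    and ea: "norm (a - c) \<le> e" and eb: "norm (b - c) \<le> e"
  shows "r * (\<kappa> - norm (u + w)) \<le> norm (u + w) * norm (c - p) + 2 * e"
proof -
  let ?s = "norm (u + w)"
  have cs1: "inner u (a - c) \<le> e"
    using norm_cauchy_schwarz[of u "a - c"] nu ea by simp
  have cs1': "- inner u (a - c) \<le> e"
    using norm_cauchy_schwarz[of "-u" "a - c"] nu ea by simp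
  have cs2: "inner w (b - c) \<le> e"
    using norm_cauchy_schwarz[of w "b - c"] nw eb by simp
  have cs2': "- inner w (b - c) \<le> e"
    using norm_cauchy_schwarz[of "-w" "b - c"] nw eb by simp
  have p1: "inner u (p - a) \<le> 0" using F1[OF pA] .
  have p2: "inner w (p - b) \<le> 0" using F2[OF pB] .
  have eq1: "inner u (c - p) = - inner u (p - a) - inner u (a - c)"
    by (simp add: inner_diff_right)
  have eq2: "inner w (c - p) = - inner w (p - b) - inner w (b - c)"
    by (simp add: inner_diff_right)
  have h1: "inner u (c - p) \<ge> - e" using eq1 p1 cs1 by linarith
  have h2: "inner w (c - p) \<ge> - e" using eq2 p2 cs2 by linarith
  have h3: "inner u (c - p) + inner w (c - p) \<le> ?s * norm (c - p)"
    using norm_cauchy_schwarz[of "u + w" "c - p"] by (simp add: inner_add_left)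
  have s0: "?s \<ge> 0" by simp
  have ust: "inner (u + w) t \<le> ?s"
    using norm_cauchy_schwarz[of "u + w" t] t(2) mult_left_mono[OF t(2) s0] by linarith
  show ?thesis
  proof (cases "t \<in> VA")
    case True
    have "norm (r *\<^sub>R t) \<le> r" using t(2) r by (simp add: mult_left_le)
    then have "p + r *\<^sub>R t \<in> A" using hA True sA by (simp add: subspace_scale)
    then have "inner u (p + r *\<^sub>R t - a) \<le> 0" using F1 by blast
    then have "r * inner u t \<le> - inner u (p - a)"
      by (simp add: inner_diff_right inner_add_right)
    moreover have "r * \<kappa> \<le> r * inner u t" using t(3) r by simp
    ultimately have "r * \<kappa> \<le> ?s * norm (c - p) + 2 * e"
      using eq1 h2 h3 cs1 cs1' by linarith
    moreover have "r * (\<kappa> - ?s) \<le> r * \<kappa>" using r s0 by (simp add: algebra_simps)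
    ultimately show ?thesis by linarith
  next
    case False
    then have tB: "t \<in> VB" using t(1) by blast
    have "- (r *\<^sub>R t) \<in> VB" using sB tB by (simp add: subspace_neg subspace_scale)
    moreover have "norm (- (r *\<^sub>R t)) \<le> r" using t(2) r by (simp add: mult_left_le)
    ultimately have "p + - (r *\<^sub>R t) \<in> B" using hB by blast
    then have "inner w (p + - (r *\<^sub>R t) - b) \<le> 0" using F2 by blast
    then have "- r * inner w t \<le> - inner w (p - b)"
      by (simp add: inner_diff_right inner_add_right)
    moreover have "inner w t \<le> ?s - \<kappa>" using ust t(3) by (simp add: inner_add_left)
    then have "r * (\<kappa> - ?s) \<le> - r * inner w t" using r
      by (metis minus_diff_eq mult_left_mono less_imp_le mult.commute mult_minus_left neg_le_iff_le)
    ultimately show ?thesis using eq2 h1 h3 cs2 cs2' by linarith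
  qed
qed

lemma final_alg:
  fixes nu nw dA dB s \<theta> :: real
  assumes "0 \<le> \<theta>" "\<theta> < 1" "0 \<le> nu" "0 \<le> nw"
    and "s\<^sup>2 \<ge> nu\<^sup>2 + nw\<^sup>2 - 2 * \<theta> * nu * nw"
    and "0 \<le> dA" "dA \<le> nu" "0 \<le> dB" "dB \<le> 2 * nu + nw"
  shows "s\<^sup>2 \<ge> (1 - \<theta>) / 5 * max (dA\<^sup>2) (dB\<^sup>2)"
proof -
  have "nu\<^sup>2 + nw\<^sup>2 - 2 * \<theta> * nu * nw \<ge> (1 - \<theta>) * (nu\<^sup>2 + nw\<^sup>2)"
  proof -
    have "\<theta> * (nu - nw)\<^sup>2 \<ge> 0" using assms(1) by simp
    then show ?thesis by (simp add: power2_eq_square algebra_simps)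
  qed
  moreover have "max (dA\<^sup>2) (dB\<^sup>2) \<le> 5 * (nu\<^sup>2 + nw\<^sup>2)"
  proof -
    have "dA\<^sup>2 \<le> nu\<^sup>2" using assms(6,7) by (simp add: power_mono)
    moreover have "dB\<^sup>2 \<le> (2 * nu + nw)\<^sup>2" using assms(8,9) by (simp add: power_mono)
    moreover have "(2 * nu + nw)\<^sup>2 \<le> 5 * (nu\<^sup>2 + nw\<^sup>2)"
      using sum_squares_ge_zero[of "nu - 2*nw" 0] by (simp add: power2_eq_square algebra_simps)
    ultimately show ?thesis by (simp add: max_def) (smt (verit) power2_less_eq_zero_iff zero_le_power2)
  qed
  then have "(1 - \<theta>) / 5 * max (dA\<^sup>2) (dB\<^sup>2) \<le> (1 - \<theta>) * (nu\<^sup>2 + nw\<^sup>2)"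
    using assms(2) by (simp add: divide_le_eq mult.commute mult_left_mono)
  ultimately show ?thesis using assms(5) by linarith
qed

theorem lemma4p2:
  fixes A B :: "'a::euclidean_space set" and c :: 'a
  assumes "closed A" "convex A" "closed B" "convex B"
    and "rel_interior A \<inter> rel_interior B \<noteq> {}"
    and "c \<in> A \<inter> B"
  defines "L \<equiv> affine hull (A \<union> B)"
    and "T \<equiv> (\<lambda>x. closest_point B (reflector A x) + x - closest_point A x)"
  shows "\<exists>\<delta>>0. \<exists>\<theta>. 0 \<le> \<theta> \<and> \<theta> < 1 \<and>
    (\<forall>x\<in>L. norm (x - c) \<le> \<delta> \<longrightarrow>
      inner (closest_point A x - reflector A x) (closest_point B (reflector A x) - reflector A x)
        \<le> \<theta> * infdist x A * infdist (reflector A x) B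
      \<and> (norm (x - T x))\<^sup>2 \<ge> (1 - \<theta>) / 5 * max ((infdist x A)\<^sup>2) ((infdist x B)\<^sup>2))"
proof -
  obtain p where p: "p \<in> rel_interior A" "p \<in> rel_interior B" using assms(5) by blast
  obtain rA where rA: "rA > 0" "cball p rA \<inter> affine hull A \<subseteq> A"
    using p(1) mem_rel_interior_cball by blast
  obtain rB where rB: "rB > 0" "cball p rB \<inter> affine hull B \<subseteq> B"
    using p(2) mem_rel_interior_cball by blast
  have pA: "p \<in> A" and pB: "p \<in> B" using p rel_interior_subset by blast+
  define r where "r = min rA rB"
  have r: "r > 0" using rA rB by (simp add: r_def)
  define VA where "VA = span ((\<lambda>x. -p + x) ` A)"
  define VB where "VB = span ((\<lambda>x. -p + x) ` B)"
  define V where "V = span ((\<lambda>x. -p + x) ` (A \<union> B))"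
  have sA: "subspace VA" and sB: "subspace VB" and sV: "subspace V"
    by (simp_all add: VA_def VB_def V_def)
  have affA: "affine hull A = (\<lambda>x. p + x) ` VA"
    unfolding VA_def by (rule affine_hull_span_gen) (simp add: pA hull_inc)
  have affB: "affine hull B = (\<lambda>x. p + x) ` VB"
    unfolding VB_def by (rule affine_hull_span_gen) (simp add: pB hull_inc)
  have affL: "L = (\<lambda>x. p + x) ` V"
    unfolding V_def L_def by (rule affine_hull_span_gen) (simp add: pB hull_inc)
  have hA: "p + t \<in> A" if "t \<in> VA" "norm t \<le> r" for t
  proof -
    have "p + t \<in> affine hull A" using affA that by blast
    moreover have "p + t \<in> cball p rA" using that r_def by (simp add: dist_norm)
    ultimately show ?thesis using rA by blast
  qed
  have hB: "p + t \<in> B" if "t \<in> VB" "norm t \<le> r" for t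
  proof -
    have "p + t \<in> affine hull B" using affB that by blast
    moreover have "p + t \<in> cball p rB" using that r_def by (simp add: dist_norm)
    ultimately show ?thesis using rB by blast
  qed
  have inV: "-p + z \<in> V" if zL: "z \<in> L" for z
  proof -
    obtain v where "v \<in> V" "z = p + v" using zL affL by blast
    then show ?thesis by simp
  qed
  have VAB: "V \<subseteq> span (VA \<union> VB)"
    unfolding V_def
  proof (rule span_minimal)
    show "(\<lambda>x. - p + x) ` (A \<union> B) \<subseteq> span (VA \<union> VB)"
    proof -
      have "(\<lambda>x. - p + x) ` (A \<union> B) \<subseteq> VA \<union> VB"
      proof -
        have "(\<lambda>x. - p + x) ` A \<subseteq> VA" unfolding VA_def by (rule span_superset)
        moreover have "(\<lambda>x. - p + x) ` B \<subseteq> VB" unfolding VB_def by (rule span_superset)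
        ultimately show ?thesis by (simp add: image_Un) blast
      qed
      then show ?thesis using span_superset[of "VA \<union> VB"] by blast
    qed
  qed simp
  obtain \<kappa> where \<kappa>: "\<kappa> > 0"
    and \<kappa>P: "\<And>z. z \<in> V \<Longrightarrow> norm z = 1 \<Longrightarrow> \<exists>t\<in>VA \<union> VB. norm t \<le> 1 \<and> \<kappa> \<le> inner z t"
    using kappa_lemma[OF sA sB _ _ _ VAB] unfolding VA_def VB_def V_def by auto
  define D where "D = norm (c - p)"
  define \<delta> where "\<delta> = r * \<kappa> / 12"
  define \<epsilon> where "\<epsilon> = min 1 (r * \<kappa> / (2 * (r + D)))"
  define \<theta> where "\<theta> = 1 - \<epsilon>\<^sup>2 / 2"
  have \<delta>: "\<delta> > 0" using r \<kappa> by (simp add: \<delta>_def)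
  have D0: "D \<ge> 0" by (simp add: D_def)
  have \<epsilon>: "\<epsilon> > 0" "\<epsilon> \<le> 1" using r \<kappa> D0 by (simp_all add: \<epsilon>_def)
  have \<theta>: "0 \<le> \<theta>" "\<theta> < 1"
  proof -
    have "\<epsilon>\<^sup>2 \<le> 1" using \<epsilon> by (simp add: power_le_one)
    moreover have "\<epsilon>\<^sup>2 > 0" using \<epsilon> by simp
    ultimately show "0 \<le> \<theta>" "\<theta> < 1" by (simp_all add: \<theta>_def)
  qed
  have neA: "A \<noteq> {}" and neB: "B \<noteq> {}" using pA pB by blast+
  have cA: "c \<in> A" and cB: "c \<in> B" using assms(6) by blast+
  have G: "\<forall>x\<in>L. norm (x - c) \<le> \<delta> \<longrightarrow>
      inner (closest_point A x - reflector A x) (closest_point B (reflector A x) - reflector A x)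
        \<le> \<theta> * infdist x A * infdist (reflector A x) B
      \<and> (norm (x - T x))\<^sup>2 \<ge> (1 - \<theta>) / 5 * max ((infdist x A)\<^sup>2) ((infdist x B)\<^sup>2)"
  proof (intro ballI impI conjI)
    fix x assume xL: "x \<in> L" and xc: "norm (x - c) \<le> \<delta>"
    define a where "a = closest_point A x"
    define y where "y = reflector A x"
    define b where "b = closest_point B y"
    define u where "u = x - a"
    define w where "w = y - b"
    have y: "y = 2 *\<^sub>R a - x" by (simp add: y_def a_def reflector_def)
    have aA: "a \<in> A" using closest_point_in_set[OF assms(1) neA] a_def by simp
    have bB: "b \<in> B" using closest_point_in_set[OF assms(3) neB] b_def by simp
    have ac: "norm (a - c) \<le> \<delta>"
      using closest_point_lipschitz[OF assms(2,1) neA, of x c] closest_point_self[OF cA] xc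
      by (simp add: a_def dist_norm)
    have yc: "norm (y - c) \<le> 3 * \<delta>"
    proof -
      have "y - c = 2 *\<^sub>R (a - c) - (x - c)" by (simp add: y algebra_simps scaleR_2)
      then have "norm (y - c) \<le> 2 * norm (a - c) + norm (x - c)"
        by (metis norm_diff_ineq norm_scaleR abs_numeral norm_triangle_ineq4 order_trans)
      then show ?thesis using ac xc by linarith
    qed
    have bc: "norm (b - c) \<le> 3 * \<delta>"
      using closest_point_lipschitz[OF assms(4,3) neB, of y c] closest_point_self[OF cB] yc
      by (simp add: b_def dist_norm)
    have ac3: "norm (a - c) \<le> 3 * \<delta>" using ac \<delta> by linarith
    have dA: "infdist x A = norm u"
      by (simp add: infdist_eq_setdist setdist_closest_point[OF assms(1) neA] u_def a_def dist_norm)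
    have dB: "infdist y B = norm w"
      by (simp add: infdist_eq_setdist setdist_closest_point[OF assms(3) neB] w_def b_def dist_norm)
    have F1: "inner u (a' - a) \<le> 0" if "a' \<in> A" for a'
      using closest_point_dot[OF assms(2,1) that, of x] by (simp add: u_def a_def)
    have F2: "inner w (b' - b) \<le> 0" if "b' \<in> B" for b'
      using closest_point_dot[OF assms(4,3) that, of y] by (simp add: w_def b_def)
    have Lx: "-p + x \<in> V" using inV xL by blast
    have La: "-p + a \<in> V" using inV aA unfolding L_def by (simp add: hull_inc)
    have Lb: "-p + b \<in> V" using inV bB unfolding L_def by (simp add: hull_inc)
    have uV: "u \<in> V" using subspace_diff[OF sV Lx La] by (simp add: u_def)
    have Ly: "-p + y = 2 *\<^sub>R (-p + a) - (-p + x)" by (simp add: y algebra_simps scaleR_2)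
    have yV: "-p + y \<in> V" unfolding Ly
      by (intro subspace_diff[OF sV] subspace_scale[OF sV] Lx La)
    have wV: "w \<in> V" using subspace_diff[OF sV yV Lb] by (simp add: w_def)
    have main: "- inner u w \<le> \<theta> * norm u * norm w"
    proof (cases "u = 0 \<or> w = 0")
      case True then show ?thesis by auto
    next
      case False
      then have nu: "norm u > 0" and nw: "norm w > 0" by auto
      define u' where "u' = (1 / norm u) *\<^sub>R u"
      define w' where "w' = (1 / norm w) *\<^sub>R w"
      have nu': "norm u' = 1" using nu by (simp add: u'_def)
      have nw': "norm w' = 1" using nw by (simp add: w'_def)
      have u'V: "u' \<in> V" using uV sV by (simp add: u'_def subspace_scale)
      have F1': "inner u' (a' - a) \<le> 0" if "a' \<in> A" for a'
        using F1[OF that] nu by (simp add: u'_def divide_nonpos_pos)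
      have F2': "inner w' (b' - b) \<le> 0" if "b' \<in> B" for b'
        using F2[OF that] nw by (simp add: w'_def divide_nonpos_pos)
      obtain t where t: "t \<in> VA \<union> VB" "norm t \<le> 1" "\<kappa> \<le> inner u' t"
        using \<kappa>P[OF u'V nu'] by blast
      have C: "r * (\<kappa> - norm (u' + w')) \<le> norm (u' + w') * D + 2 * (3 * \<delta>)"
        using core[OF pA pB r hA hB sA sB t nu' nw' F1' F2' ac3 bc] by (simp add: D_def)
      let ?s = "norm (u' + w')"
      have "r * \<kappa> / 2 \<le> ?s * (r + D)" using C by (simp add: \<delta>_def algebra_simps)
      then have "r * \<kappa> / (2 * (r + D)) \<le> ?s" using r D0
        by (simp add: divide_le_eq algebra_simps)
      then have se: "\<epsilon> \<le> ?s" by (simp add: \<epsilon>_def)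
      then have "\<epsilon>\<^sup>2 \<le> ?s\<^sup>2" using \<epsilon> by (simp add: power_mono)
      moreover have "?s\<^sup>2 = 2 + 2 * inner u' w'"
        using nu' nw' by (simp add: power2_norm_eq_inner inner_add_left inner_add_right inner_commute)
          (simp add: power2_norm_eq_inner[symmetric])
      ultimately have i: "- inner u' w' \<le> \<theta>" by (simp add: \<theta>_def)
      have "inner u w = norm u * norm w * inner u' w'"
        using nu nw by (simp add: u'_def w'_def)
      then have "- inner u w = norm u * norm w * (- inner u' w')" by simp
      also have "\<dots> \<le> norm u * norm w * \<theta>"
        using i nu nw by (intro mult_left_mono) auto
      finally show ?thesis by (simp add: mult.commute mult.left_commute)
    qed
    have e1: "closest_point A x - reflector A x = u"
      by (simp add: a_def[symmetric] y_def[symmetric] y u_def algebra_simps scaleR_2)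
    have e2: "closest_point B (reflector A x) - reflector A x = - w"
      by (simp add: y_def[symmetric] b_def[symmetric] w_def)
    show "inner (closest_point A x - reflector A x) (closest_point B (reflector A x) - reflector A x)
        \<le> \<theta> * infdist x A * infdist (reflector A x) B"
    proof -
      have "inner (closest_point A x - reflector A x) (closest_point B (reflector A x) - reflector A x)
          = - inner u w" by (simp only: e1 e2 inner_minus_right)
      moreover have "infdist (reflector A x) B = norm w" using dB y_def by simp
      ultimately show ?thesis using main dA by simp
    qed
    have Tx: "T x = b + x - a" by (simp add: T_def b_def y_def a_def)
    have xT: "x - T x = u + w"
      unfolding Tx u_def w_def y by (simp add: algebra_simps scaleR_2)
    have sq: "(norm (u + w))\<^sup>2 \<ge> (norm u)\<^sup>2 + (norm w)\<^sup>2 - 2 * \<theta> * norm u * norm w"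
    proof -
      have "(norm (u + w))\<^sup>2 = (norm u)\<^sup>2 + (norm w)\<^sup>2 + 2 * inner u w"
        by (simp add: power2_norm_eq_inner inner_add_left inner_add_right inner_commute)
      then show ?thesis using main by linarith
    qed
    have dBx: "infdist x B \<le> 2 * norm u + norm w"
    proof -
      have "infdist x B \<le> dist x b" using infdist_le[OF bB] .
      also have "x - b = 2 *\<^sub>R u + w" by (simp add: u_def w_def y algebra_simps scaleR_2)
      then have "dist x b \<le> 2 * norm u + norm w"
        by (metis dist_norm norm_scaleR abs_numeral norm_triangle_ineq)
      finally show ?thesis .
    qed
    show "(norm (x - T x))\<^sup>2 \<ge> (1 - \<theta>) / 5 * max ((infdist x A)\<^sup>2) ((infdist x B)\<^sup>2)"
      unfolding xT
      by (rule final_alg[OF \<theta> norm_ge_zero norm_ge_zero sq infdist_nonneg _ infdist_nonneg dBx])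
        (simp add: dA)
  qed
  then show ?thesis using \<delta> \<theta> by blast
qed

end
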